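(* Let $\phi\in(0,1)$, $\alpha_\infty,K_0,\eta,\rho_f,\Lambda>0$, $\nu:=\eta/\rho_f$, $F:=\alpha_\infty/\phi$, $C_2:=FK_0/\nu$, $C_1:=4C_2FK_0/\Lambda^2$, $\xi_p:=\frac{C_1+\sqrt{C_1^2+4C_2^2}}{2}$, $a:=\frac{\eta\phi}{\rho_fK_0}$. Let $K^D(\omega)=K_0/(\sqrt{1-iC_1\omega}-iC_2\omega)$ (principal root) and $T^D(\omega):=\frac{i\eta\phi}{\omega\rho_f}K^D(\omega)^{-1}$, and let $\sigma^D$ be the positive measure on $[0,\xi_p]$ with $T^D(\omega)=a\,i/\omega+\int_0^{\xi_p}d\sigma^D(t)/(1-i\omega t)$ for real $\omega\neq0$. Then, with $s=-i\omega$, $$D^D(s):=T^D(\omega)-\frac{ia}{\omega}=\alpha_\infty+\frac{\alpha_\infty(\sqrt{1+C_1s}-1)}{C_2s}=\int_0^{\xi_p}\frac{d\sigma^D(t)}{1+st},$$ and the moments $\mu_k(d\sigma^D):=\int t^k d\sigma^D(t)$ are $$\mu_0(d\sigma^D)=\alpha_\infty+\frac{2K_0\alpha_\infty^2}{\phi\Lambda^2},\qquad \mu_k(d\sigma^D)=\frac{C_1^{k+1}\alpha_\infty}{(k+1)!\,2^{k+1}C_2}\prod_{j=1}^k(2j-1)\quad(k\ge1).$$ Consequently, with $d\lambda^D(u):=u\,dG(u)$ where $dG=\chi_{[0,C_1]}(u)\frac{\psi(u)}{u}du+\frac{r}{\xi_p}\delta_{\xi_p}$ is the JKD probability measure (so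 that $K^D(\omega)=\frac{\nu}{F}\int_0^{\xi_p}\frac{d\lambda^D(u)}{1-i\omega u}$) and $\mu_k(d\lambda^D):=\int u^kd\lambda^D(u)$, $$\Lambda=\sqrt{\frac{2K_0\alpha_\infty^2}{\phi\,[\mu_0(d\sigma^D)-\alpha_\infty]}}=\sqrt{\frac{2K_0\alpha_\infty}{\phi\left[\frac{\mu_1(d\lambda^D)}{\mu_0(d\lambda^D)^2}-1\right]}}.$$
   Context: $\psi(u)=\frac{C_2\sqrt{u(C_1-u)}}{\pi[C_2^2+u(C_1-u)]}$ for $u\in[0,C_1]$, $r=\frac{2C_2\sqrt{\xi_p(\xi_p-C_1)}}{2\xi_p-C_1}$; $\chi_{[0,C_1]}$ is the indicator of $[0,C_1]$ and $\delta_{\xi_p}$ the Dirac measure at $\xi_p$. The square root $\sqrt{1+C_1s}$ is the principal branch (branch cut $(-\infty,-1/C_1]$ in $s$). *)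

theory Defs
  imports "HOL-Analysis.Analysis"
begin

definition KD :: "real \<Rightarrow> real \<Rightarrow> real \<Rightarrow> real \<Rightarrow> complex" where
  "KD K0 C1 C2 \<omega> = complex_of_real K0 /
      (csqrt (1 - \<i> * complex_of_real (C1 * \<omega>)) - \<i> * complex_of_real (C2 * \<omega>))"

definition psiJKD :: "real \<Rightarrow> real \<Rightarrow> real \<Rightarrow> real" where
  "psiJKD C1 C2 u = C2 * sqrt (u * (C1 - u)) / (pi * (C2\<^sup>2 + u * (C1 - u)))"

text \<open>k-th moment of d lambda^D(u) = u dG(u) = chi_[0,C1](u) psi(u) du + r delta_{xi_p}.\<close>
definition mu_lambdaD :: "real \<Rightarrow> real \<Rightarrow> real \<Rightarrow> real \<Rightarrow> nat \<Rightarrow> real" where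
  "mu_lambdaD C1 C2 r \<xi>p k =
     (LINT u:{0..C1}|lborel. u ^ k * psiJKD C1 C2 u) + r * \<xi>p ^ k"

end

theory Submission
  imports Defs
begin



lemma moment_series:
  fixes \<sigma> :: "real measure" and \<xi> \<omega> :: real
  assumes S: "sets \<sigma> = sets borel" and fm: "finite_measure \<sigma>"
    and E: "emeasure \<sigma> (-{0..\<xi>}) = 0" and xi: "0 < \<xi>" and w: "\<bar>\<omega>\<bar> * \<xi> < 1"
  shows "(\<lambda>k. complex_of_real (\<integral>t. t^k \<partial>\<sigma>) * (\<i> * of_real \<omega>)^k) sums
           (\<integral>t. 1 / (1 - \<i> * complex_of_real (\<omega> * t)) \<partial>\<sigma>)"
proof -
  interpret finite_measure \<sigma> by fact
  have AE: "AE t in \<sigma>. t \<in> {0..\<xi>}"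
    by (rule AE_I[of _ _ "-{0..\<xi>}"]) (use E S in \<open>auto simp: sets_eq_imp_space_eq\<close>)
  have meas: "f \<in> borel_measurable \<sigma>" if "f \<in> borel_measurable borel" for f :: "real \<Rightarrow> complex"
    using that measurable_cong_sets[OF S refl] by blast
  have measr: "f \<in> borel_measurable \<sigma>" if "f \<in> borel_measurable borel" for f :: "real \<Rightarrow> real"
    using that measurable_cong_sets[OF S refl] by blast
  define B where "B = 1 / (1 - \<bar>\<omega>\<bar> * \<xi>)"
  have nz: "norm (\<i> * complex_of_real (\<omega> * t)) < 1" if "t \<in> {0..\<xi>}" for t
  proof -
    have "\<bar>\<omega> * t\<bar> \<le> \<bar>\<omega>\<bar> * \<xi>" using that by (auto simp: abs_mult intro: mult_left_mono)
    thus ?thesis using w by (simp add: norm_mult)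
  qed
  define s where "s n t = (\<Sum>k<n. (\<i> * complex_of_real (\<omega> * t))^k)" for n t
  have intk: "integrable \<sigma> (\<lambda>t. t^k)" for k
  proof (rule integrable_const_bound[where B="\<xi>^k"])
    show "AE t in \<sigma>. norm (t^k) \<le> \<xi>^k" using AE by eventually_elim (auto simp: power_mono norm_power)
    show "(\<lambda>t. t^k) \<in> borel_measurable \<sigma>" by (rule measr) measurable
  qed
  have lim: "(\<lambda>n. integral\<^sup>L \<sigma> (s n)) \<longlonglongrightarrow> (\<integral>t. 1 / (1 - \<i> * complex_of_real (\<omega> * t)) \<partial>\<sigma>)"
  proof (rule integral_dominated_convergence[where w="\<lambda>_. B"])
    show "(\<lambda>t. 1 / (1 - \<i> * complex_of_real (\<omega> * t))) \<in> borel_measurable \<sigma>"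
      by (rule meas) measurable
    show "s i \<in> borel_measurable \<sigma>" for i unfolding s_def by (rule meas) measurable
    show "integrable \<sigma> (\<lambda>_. B)" by simp
    show "AE t in \<sigma>. (\<lambda>i. s i t) \<longlonglongrightarrow> 1 / (1 - \<i> * complex_of_real (\<omega> * t))"
      using AE proof eventually_elim
      case (elim t)
      from geometric_sums[OF nz[OF elim]] show ?case unfolding s_def sums_def .
    qed
    show "AE t in \<sigma>. norm (s i t) \<le> B" for i
      using AE proof eventually_elim
      case (elim t)
      have q: "\<bar>\<omega> * t\<bar> \<le> \<bar>\<omega>\<bar> * \<xi>" using elim by (auto simp: abs_mult intro: mult_left_mono)
      have "norm (s i t) \<le> (\<Sum>k<i. (\<bar>\<omega>\<bar> * \<xi>)^k)"
        unfolding s_def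
        by (rule order_trans[OF norm_sum sum_mono]) (use q in \<open>auto simp: norm_power norm_mult intro!: power_mono\<close>)
      also have "\<dots> \<le> (\<Sum>k. (\<bar>\<omega>\<bar> * \<xi>)^k)"
        by (rule sum_le_suminf) (use w xi in \<open>auto intro!: summable_geometric\<close>)
      also have "\<dots> = B" unfolding B_def using w xi by (subst suminf_geometric) (auto simp: abs_mult)
      finally show ?case .
    qed
  qed
  have "integral\<^sup>L \<sigma> (s n) = (\<Sum>k<n. complex_of_real (\<integral>t. t^k \<partial>\<sigma>) * (\<i> * of_real \<omega>)^k)" for n
  proof -
    have "s n = (\<lambda>t. \<Sum>k<n. (\<i> * of_real \<omega>)^k * complex_of_real (t^k))"
      unfolding s_def by (auto simp: power_mult_distrib mult.assoc)
    moreover have "integrable \<sigma> (\<lambda>t. (\<i> * of_real \<omega>)^k * complex_of_real (t^k))" for k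
      by (intro integrable_mult_right integrable_of_real intk)
    ultimately have "integral\<^sup>L \<sigma> (s n) = (\<Sum>k<n. (\<i> * of_real \<omega>)^k * (CLINT t|\<sigma>. complex_of_real (t ^ k)))"
      by (simp add: integral_sum del: of_real_power)
    thus ?thesis by (simp only: integral_complex_of_real mult.commute)
  qed
  with lim show ?thesis unfolding sums_def by simp
qed



lemma powser_zero_unique:
  fixes c :: "nat \<Rightarrow> complex" and \<epsilon> :: real
  assumes e: "0 < \<epsilon>" and S: "\<And>x. 0 < x \<Longrightarrow> x < \<epsilon> \<Longrightarrow> (\<lambda>n. c n * complex_of_real x ^ n) sums 0"
  shows "c k = 0"
proof (induction k rule: less_induct)
  case (less k)
  define g where "g z = (\<Sum>n. c (n + k) * z ^ n)" for z :: complex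
  have sh: "(\<lambda>n. c (n + k) * complex_of_real x ^ n) sums 0" if x: "0 < x" "x < \<epsilon>" for x
  proof -
    have "(\<lambda>n. c (n + k) * complex_of_real x ^ (n + k)) sums 0"
      using sums_zero_iff_shift[of k "\<lambda>n. c n * complex_of_real x ^ n" 0] S[OF x] less by simp
    hence "(\<lambda>n. (c (n + k) * complex_of_real x ^ (n + k)) * inverse (complex_of_real x ^ k)) sums (0 * inverse (complex_of_real x ^ k))"
      by (rule sums_mult2)
    thus ?thesis using x by (simp add: power_add field_simps)
  qed
  have g0: "g (complex_of_real x) = 0" if "0 < x" "x < \<epsilon>" for x
    using sh[OF that] unfolding g_def by (simp add: sums_iff)
  have "isCont g 0" unfolding g_def
    by (rule isCont_powser[of _ "complex_of_real (\<epsilon>/2)"]) (use sh[of "\<epsilon>/2"] e in \<open>auto simp: sums_iff\<close>)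
  hence "((\<lambda>x::real. g (complex_of_real x)) \<longlongrightarrow> g 0) (at_right 0)"
    proof (rule isCont_tendsto_compose[where g=g])
    have "((\<lambda>x::real. complex_of_real x) \<longlongrightarrow> complex_of_real 0) (at_right 0)"
      by (intro tendsto_intros tendsto_ident_at)
    thus "((\<lambda>x::real. complex_of_real x) \<longlongrightarrow> 0) (at_right 0)" by simp
  qed
  moreover have "((\<lambda>x::real. g (complex_of_real x)) \<longlongrightarrow> 0) (at_right 0)"
  proof (rule tendsto_eventually)
    show "\<forall>\<^sub>F x in at_right 0. g (complex_of_real x) = 0"
      using eventually_at_right_real[OF e] by eventually_elim (auto intro: g0)
  qed
  ultimately have "g 0 = 0" by (rule tendsto_unique[rotated]) simp
  moreover have "g 0 = c k" unfolding g_def using powser_zero[of "\<lambda>n. c (n+k)"] by simp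
  ultimately show ?case by simp
qed



lemma half_prod:
  "(\<Prod>i=0..n. (1/2::complex) - of_nat i) * (-1)^n = complex_of_real (\<Prod>j=1..n. 2 * real j - 1) / 2^(Suc n)"
proof (induction n)
  case 0 then show ?case by simp
next
  case (Suc n)
  have "(\<Prod>i=0..Suc n. (1/2::complex) - of_nat i) * (-1)^Suc n
        = ((\<Prod>i=0..n. (1/2::complex) - of_nat i) * (-1)^n) * (of_nat (Suc n) - 1/2)"
    by (simp add: prod.atLeast0_atMost_Suc algebra_simps)
  also have "\<dots> = complex_of_real (\<Prod>j=1..n. 2 * real j - 1) / 2^(Suc n) * (of_nat (Suc n) - 1/2)"
    using Suc by simp
  also have "\<dots> = complex_of_real (\<Prod>j=1..Suc n. 2 * real j - 1) / 2^(Suc (Suc n))"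
    by (simp add: prod.nat_ivl_Suc' field_simps)
  finally show ?case .
qed

lemma half_gchoose:
  "((1/2::complex) gchoose Suc n) * (-1)^n = complex_of_real (\<Prod>j=1..n. 2 * real j - 1) / (fact (Suc n) * 2^(Suc n))"
proof -
  have "((1/2::complex) gchoose Suc n) * (-1)^n = ((\<Prod>i=0..n. (1/2::complex) - of_nat i) * (-1)^n) / fact (Suc n)"
    by (simp only: gbinomial_Suc) simp
  also have "\<dots> = complex_of_real (\<Prod>j=1..n. 2 * real j - 1) / (fact (Suc n) * 2^(Suc n))"
    by (simp only: half_prod) simp
  finally show ?thesis .
qed



lemma sqrt_series:
  fixes C1 \<omega> \<alpha> a :: real
  assumes w: "\<omega> \<noteq> 0" and c: "\<bar>C1 * \<omega>\<bar> < 1"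
  shows "(\<lambda>n. ((if n = 0 then complex_of_real \<alpha> else 0) + complex_of_real (a*C1) * ((1/2) gchoose Suc n) * (-\<i> * of_real C1)^n) * of_real \<omega> ^ n)
    sums (of_real \<alpha> + of_real a * (csqrt (1 + of_real C1 * (-\<i> * of_real \<omega>)) - 1) / (-\<i> * of_real \<omega>))"
proof -
  define z where "z = complex_of_real C1 * (-\<i> * of_real \<omega>)"
  define s where "s = -\<i> * complex_of_real \<omega>"
  have s0: "s \<noteq> 0" using w by (simp add: s_def)
  have "norm z < 1" using c by (simp add: z_def norm_mult abs_mult)
  from gen_binomial_complex[OF this, of "1/2"]
  have "(\<lambda>n. ((1/2) gchoose n) * z^n) sums csqrt (1 + z)" by (simp add: csqrt_conv_powr)
  hence "(\<lambda>n. ((1/2) gchoose Suc n) * z^Suc n) sums (csqrt (1 + z) - 1)"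
    by (subst sums_Suc_iff) simp
  hence "(\<lambda>n. (((1/2) gchoose Suc n) * z^Suc n) * (of_real a / s)) sums ((csqrt (1 + z) - 1) * (of_real a / s))"
    by (rule sums_mult2)
  moreover have "(((1/2) gchoose Suc n) * z^Suc n) * (of_real a / s) = complex_of_real (a*C1) * ((1/2) gchoose Suc n) * (-\<i> * of_real C1)^n * of_real \<omega> ^ n" for n
  proof -
    have e: "z^Suc n = (-\<i> * of_real C1)^n * of_real \<omega> ^ n * z"
      by (simp add: z_def power_mult_distrib[symmetric] mult_ac)
    show ?thesis using s0 unfolding e by (simp add: z_def s_def field_simps)
  qed
  ultimately have A: "(\<lambda>n. complex_of_real (a*C1) * ((1/2) gchoose Suc n) * (-\<i> * of_real C1)^n * of_real \<omega> ^ n) sums ((csqrt (1 + z) - 1) * (of_real a / s))"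
    by simp
  have B: "(\<lambda>n. if n = 0 then complex_of_real \<alpha> * of_real \<omega> ^ n else 0) sums of_real \<alpha>"
    using sums_single[of 0 "\<lambda>n. complex_of_real \<alpha> * of_real \<omega> ^ n"] by simp
  have f: "(\<lambda>n. (if n = 0 then complex_of_real \<alpha> * of_real \<omega> ^ n else 0) + complex_of_real (a*C1) * ((1/2) gchoose Suc n) * (-\<i> * of_real C1)^n * of_real \<omega> ^ n)
     = (\<lambda>n. ((if n = 0 then complex_of_real \<alpha> else 0) + complex_of_real (a*C1) * ((1/2) gchoose Suc n) * (-\<i> * of_real C1)^n) * of_real \<omega> ^ n)"
    by (rule ext) (simp add: distrib_right)
  have v: "of_real \<alpha> + (csqrt (1 + z) - 1) * (of_real a / s) = of_real \<alpha> + of_real a * (csqrt (1 + of_real C1 * (-\<i> * of_real \<omega>)) - 1) / (-\<i> * of_real \<omega>)"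
    by (simp add: z_def s_def)
  from sums_add[OF B A] show ?thesis unfolding f v .
qed



lemma deriv_H0:
  fixes R C2 u :: real
  assumes R: "0 < R" and C2: "0 < C2" and u: "0 < u" "u < 2*R"
  defines "S \<equiv> sqrt (C2\<^sup>2 + R\<^sup>2)"
  shows "((\<lambda>u. arcsin ((u - R)/R) - (C2/S) * arcsin (C2*(u-R)/(R * sqrt (C2\<^sup>2 + R\<^sup>2 - (u-R)\<^sup>2))))
          has_real_derivative sqrt (u*(2*R-u)) / (C2\<^sup>2 + u*(2*R-u))) (at u)"
proof -
  define x where "x = u - R"
  define q where "q = sqrt (R\<^sup>2 - x\<^sup>2)"
  define p where "p = sqrt (C2\<^sup>2 + R\<^sup>2 - x\<^sup>2)"
  have xa: "\<bar>x\<bar> < \<bar>R\<bar>" using u R unfolding x_def by auto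
  have xR: "x\<^sup>2 < R\<^sup>2" using xa abs_le_square_iff[of R x] by linarith
  have q0: "q > 0" using xR by (simp add: q_def)
  have qq: "q\<^sup>2 = R\<^sup>2 - x\<^sup>2" using xR by (simp add: q_def)
  have pos0: "0 < C2\<^sup>2 + R\<^sup>2 - x\<^sup>2" using xR zero_le_power2[of C2] by linarith
  have pp: "p\<^sup>2 = C2\<^sup>2 + R\<^sup>2 - x\<^sup>2" using pos0 by (simp add: p_def)
  have p0: "p > 0" using pos0 by (simp add: p_def)
  have S0: "S > 0" using C2 by (simp add: S_def add_pos_nonneg)
  have SS: "S\<^sup>2 = C2\<^sup>2 + R\<^sup>2" by (simp add: S_def add_nonneg_nonneg)
  have w: "u*(2*R-u) = q\<^sup>2" using qq unfolding x_def by (simp add: algebra_simps power2_eq_square)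
  have sqw: "sqrt (u*(2*R-u)) = q" using w q0 by simp
  have a1: "\<bar>(u-R)/R\<bar> < 1" using xR R unfolding x_def
    using xa by (simp add: x_def abs_divide)
  have s1: "sqrt (1 - ((u - R)/R)\<^sup>2) = q / R"
  proof -
    have "1 - ((u - R)/R)\<^sup>2 = (q / R)\<^sup>2" using qq R unfolding x_def by (simp add: field_simps power2_eq_square)
    thus ?thesis using q0 R by simp
  qed
  have D1: "((\<lambda>u. arcsin ((u - R)/R)) has_real_derivative 1/q) (at u)"
    using a1 R q0 s1
    by (auto intro!: derivative_eq_intros simp: abs_less_iff field_simps)
  define g where "g u = C2*(u-R)/(R * sqrt (C2\<^sup>2 + R\<^sup>2 - (u-R)\<^sup>2))" for u
  have gu: "g u = C2*x/(R*p)" by (simp add: g_def x_def p_def)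
  have Dg: "(g has_real_derivative C2*S\<^sup>2/(R*p^3)) (at u)"
  proof -
    have pos: "0 < C2\<^sup>2 + R\<^sup>2 - (u-R)\<^sup>2" using pos0 unfolding x_def .
    have "(g has_real_derivative
          (C2 * (R * sqrt (C2\<^sup>2 + R\<^sup>2 - (u-R)\<^sup>2)) - C2*(u-R) * (R * (inverse (sqrt (C2\<^sup>2 + R\<^sup>2 - (u-R)\<^sup>2)) / 2 * (- (2 * (u - R))))))
             / (R * sqrt (C2\<^sup>2 + R\<^sup>2 - (u-R)\<^sup>2))\<^sup>2) (at u)"
      unfolding g_def using pos R
      by (auto intro!: derivative_eq_intros simp: power2_eq_square)
    moreover have "(C2 * (R * sqrt (C2\<^sup>2 + R\<^sup>2 - (u-R)\<^sup>2)) - C2*(u-R) * (R * (inverse (sqrt (C2\<^sup>2 + R\<^sup>2 - (u-R)\<^sup>2)) / 2 * (- (2 * (u - R))))))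
             / (R * sqrt (C2\<^sup>2 + R\<^sup>2 - (u-R)\<^sup>2))\<^sup>2 = C2*S\<^sup>2/(R*p^3)"
    proof -
      have e: "sqrt (C2\<^sup>2 + R\<^sup>2 - (u-R)\<^sup>2) = p" by (simp add: p_def x_def)
      have n: "C2*(R*p) - C2*x*(R*(inverse p/2*(-(2*x)))) = C2*R*(p\<^sup>2 + x\<^sup>2)/p"
        using p0 by (simp add: field_simps power2_eq_square)
      have px: "p\<^sup>2 + x\<^sup>2 = C2\<^sup>2 + R\<^sup>2" using pp by simp
      have "C2*R*(C2\<^sup>2 + R\<^sup>2)/p / (R*p)\<^sup>2 = C2*(C2\<^sup>2 + R\<^sup>2)/(R*p^3)"
        using p0 R by (simp add: field_simps power2_eq_square power3_eq_cube)
      with n px show ?thesis unfolding SS x_def[symmetric] p_def[symmetric] by simp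
    qed
    ultimately show ?thesis by simp
  qed
  have g1: "\<bar>g u\<bar> < 1"
  proof -
    have "(g u)\<^sup>2 < 1"
    proof -
      have e: "R\<^sup>2*p\<^sup>2 - C2\<^sup>2*x\<^sup>2 = (C2\<^sup>2+R\<^sup>2)*(R\<^sup>2-x\<^sup>2)" unfolding pp by (simp add: algebra_simps power2_eq_square)
      have "0 < (C2\<^sup>2+R\<^sup>2)*(R\<^sup>2-x\<^sup>2)" using xR C2 by (intro mult_pos_pos) (auto simp: add_pos_nonneg)
      hence "(C2*x)\<^sup>2 < (R*p)\<^sup>2" using e by (simp add: power_mult_distrib)
      thus ?thesis unfolding gu using R p0 by (simp add: power_divide)
    qed
    thus ?thesis by (simp add: abs_square_less_1)
  qed
  have s2: "sqrt (1 - (g u)\<^sup>2) = S*q/(R*p)"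
  proof -
    have e: "R\<^sup>2*p\<^sup>2 - C2\<^sup>2*x\<^sup>2 = (C2\<^sup>2+R\<^sup>2)*(R\<^sup>2-x\<^sup>2)" unfolding pp by (simp add: algebra_simps power2_eq_square)
    have "1 - (g u)\<^sup>2 = (R\<^sup>2*p\<^sup>2 - C2\<^sup>2*x\<^sup>2) / (R\<^sup>2*p\<^sup>2)" unfolding gu using R p0
      by (simp add: field_simps power2_eq_square)
    also have "\<dots> = (S\<^sup>2*q\<^sup>2) / (R\<^sup>2*p\<^sup>2)" unfolding e SS qq ..
    also have "\<dots> = (S*q/(R*p))\<^sup>2" by (simp add: power_divide power_mult_distrib)
    finally have "1 - (g u)\<^sup>2 = (S*q/(R*p))\<^sup>2" .
    thus ?thesis using S0 q0 R p0 by simp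
  qed
  have D2: "((\<lambda>u. arcsin (g u)) has_real_derivative inverse (S*q/(R*p)) * (C2*S\<^sup>2/(R*p^3))) (at u)"
    using DERIV_chain2[OF DERIV_arcsin Dg] g1 s2 by (simp add: abs_less_iff)
  have D: "((\<lambda>u. arcsin ((u - R)/R) - (C2/S) * arcsin (g u)) has_real_derivative
       1/q - (C2/S) * (inverse (S*q/(R*p)) * (C2*S\<^sup>2/(R*p^3)))) (at u)"
    by (intro DERIV_diff D1 DERIV_cmult D2)
  have "1/q - (C2/S) * (inverse (S*q/(R*p)) * (C2*S\<^sup>2/(R*p^3))) = sqrt (u*(2*R-u)) / (C2\<^sup>2 + u*(2*R-u))"
  proof -
    have m: "(C2/S)*(inverse(S*q/(R*p)) * (C2*S\<^sup>2/(R*p^3))) = C2\<^sup>2/(q*p\<^sup>2)"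
      using S0 q0 R p0 by (simp add: field_simps power2_eq_square power3_eq_cube)
    have pq: "C2\<^sup>2 + q\<^sup>2 = p\<^sup>2" using pp qq by simp
    have "1/q - C2\<^sup>2/(q*p\<^sup>2) = (p\<^sup>2 - C2\<^sup>2)/(q*p\<^sup>2)" using q0 p0 by (simp add: field_simps)
    also have "\<dots> = q\<^sup>2/(q*p\<^sup>2)" using pq by simp
    also have "\<dots> = q/p\<^sup>2" using q0 by (simp add: power2_eq_square)
    finally show ?thesis unfolding sqw w m pq using q0 by simp
  qed
  with D show ?thesis unfolding g_def by simp
qed



lemma lint_ftc:
  fixes f F :: "real \<Rightarrow> real"
  assumes ab: "a \<le> b" and cf: "continuous_on {a..b} f" and cF: "continuous_on {a..b} F"
    and d: "\<And>x. x \<in> {a<..<b} \<Longrightarrow> (F has_real_derivative f x) (at x)"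
  shows "(LINT x:{a..b}|lborel. f x) = F b - F a"
proof -
  have si: "set_integrable lborel {a..b} f"
    unfolding set_integrable_def by (rule borel_integrable_compact) (auto intro: cf)
  have "(f has_integral (F b - F a)) {a..b}"
    by (rule fundamental_theorem_of_calculus_interior[OF ab cF])
       (use d in \<open>auto simp: has_real_derivative_iff_has_vector_derivative\<close>)
  with set_borel_integral_eq_integral(2)[OF si] show ?thesis by (simp add: integral_unique)
qed

lemma deriv_E:
  fixes R C2 u :: real
  assumes R: "0 < R" and C2: "0 < C2" and u: "0 < u" "u < 2*R"
  shows "((\<lambda>u. - sqrt (u*(2*R-u)) + C2 * arctan (sqrt (u*(2*R-u)) / C2))
          has_real_derivative (u - R) * sqrt (u*(2*R-u)) / (C2\<^sup>2 + u*(2*R-u))) (at u)"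
proof -
  define w where "w = u*(2*R-u)"
  have w0: "w > 0" using u by (simp add: w_def)
  define q where "q = sqrt w"
  have q0: "q > 0" using w0 by (simp add: q_def)
  have qq: "q\<^sup>2 = w" using w0 by (simp add: q_def)
  have "((\<lambda>u. - sqrt (u*(2*R-u)) + C2 * arctan (sqrt (u*(2*R-u)) / C2)) has_real_derivative
      - (inverse (sqrt w) / 2 * (2*R - 2*u)) + C2 * (inverse (1 + (sqrt w / C2)\<^sup>2) * (inverse (sqrt w) / 2 * (2*R - 2*u) / C2))) (at u)"
  proof -
    have Dw: "((\<lambda>u. u*(2*R-u)) has_real_derivative (2*R - 2*u)) (at u)"
      by (auto intro!: derivative_eq_intros simp: algebra_simps)
    have Dq: "((\<lambda>u. sqrt (u*(2*R-u))) has_real_derivative inverse (sqrt w) / 2 * (2*R - 2*u)) (at u)"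
      using DERIV_chain2[OF DERIV_real_sqrt[OF w0[unfolded w_def]] Dw] by (simp add: w_def)
    have Da: "((\<lambda>u. arctan (sqrt (u*(2*R-u)) / C2)) has_real_derivative
        inverse (1 + (sqrt w / C2)\<^sup>2) * (inverse (sqrt w) / 2 * (2*R - 2*u) / C2)) (at u)"
      using DERIV_chain2[OF DERIV_arctan DERIV_cdivide[OF Dq, of C2]] by (simp add: w_def)
    show ?thesis by (intro DERIV_add DERIV_minus DERIV_cmult Dq Da)
  qed
  moreover have "- (inverse (sqrt w) / 2 * (2*R - 2*u)) + C2 * (inverse (1 + (sqrt w / C2)\<^sup>2) * (inverse (sqrt w) / 2 * (2*R - 2*u) / C2))
      = (u - R) * sqrt (u*(2*R-u)) / (C2\<^sup>2 + u*(2*R-u))"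
  proof -
    have "- (inverse q / 2 * (2*R - 2*u)) + C2 * (inverse (1 + (q / C2)\<^sup>2) * (inverse q / 2 * (2*R - 2*u) / C2))
        = (u - R) * q\<^sup>2 / (q * (C2\<^sup>2 + q\<^sup>2))"
    proof -
      have d: "C2*C2 + q*q > 0" using q0 C2 by (simp add: add_pos_pos)
      have i: "inverse (1 + (q / C2)\<^sup>2) = C2\<^sup>2/(C2\<^sup>2 + q\<^sup>2)" using C2 d by (simp add: field_simps power2_eq_square)
      define D where "D = C2\<^sup>2 + q\<^sup>2"
      have D0: "D > 0" using d by (simp add: D_def power2_eq_square)
      have k: "inverse q / 2 * (2*R - 2*u) = (R-u)/q" using q0 by (simp add: field_simps)
      have c: "C2 * (C2\<^sup>2/D * ((R-u)/q / C2)) = C2\<^sup>2/D * ((R-u)/q)" using C2 by simp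
      have e: "- ((R-u)/q) + C2\<^sup>2/D * ((R-u)/q) = (u - R) * q\<^sup>2 / (q * D)"
      proof -
        have "- ((R-u)/q) + C2\<^sup>2/D * ((R-u)/q) = (u-R)/q * ((D - C2\<^sup>2)/D)"
          using D0 q0 by (simp add: field_simps)
        also have "D - C2\<^sup>2 = q\<^sup>2" by (simp add: D_def)
        finally show ?thesis using q0 D0 by simp
      qed
      show ?thesis unfolding i k D_def[symmetric] c e ..
    qed
    also have "\<dots> = (u - R) * q / (C2\<^sup>2 + q\<^sup>2)" using q0 by (simp add: power2_eq_square)
    finally show ?thesis unfolding q_def w_def using w0 unfolding w_def by simp
  qed
  ultimately show ?thesis by simp
qed



lemma psi_integrals:
  fixes C1 C2 :: real
  assumes C1: "0 < C1" and C2: "0 < C2"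
  defines "S \<equiv> sqrt (C2\<^sup>2 + (C1/2)\<^sup>2)"
  shows "(LINT u:{0..C1}|lborel. psiJKD C1 C2 u) = C2 - C2\<^sup>2/S"
    and "(LINT u:{0..C1}|lborel. u * psiJKD C1 C2 u) = C1/2 * (C2 - C2\<^sup>2/S)"
proof -
  define R where "R = C1/2"
  have R: "0 < R" using C1 by (simp add: R_def)
  have C1R: "C1 = 2*R" by (simp add: R_def)
  have S0: "S > 0" using C2 by (simp add: S_def add_pos_nonneg)
  define H0 where "H0 u = arcsin ((u - R)/R) - (C2/S) * arcsin (C2*(u-R)/(R * sqrt (C2\<^sup>2 + R\<^sup>2 - (u-R)\<^sup>2)))" for u
  define E where "E u = - sqrt (u*(2*R-u)) + C2 * arctan (sqrt (u*(2*R-u)) / C2)" for u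
  have psi: "psiJKD C1 C2 u = C2/pi * (sqrt (u*(2*R-u)) / (C2\<^sup>2 + u*(2*R-u)))" for u
    by (simp add: psiJKD_def C1R)
  have dpos: "0 < C2\<^sup>2 + u*(2*R-u)" if "u \<in> {0..2*R}" for u
    using that C2 by (intro add_pos_nonneg) auto
  have cpsi: "continuous_on {0..C1} (\<lambda>u. psiJKD C1 C2 u)"
    unfolding psiJKD_def C1R by (intro continuous_intros) (auto dest!: dpos)
  have ppos: "0 < C2\<^sup>2 + R\<^sup>2 - (u-R)\<^sup>2" if "u \<in> {0..2*R}" for u
  proof -
    have "(u-R)\<^sup>2 \<le> R\<^sup>2" using that R abs_le_square_iff[of "u-R" R] by auto
    thus ?thesis using C2 by (smt (verit) zero_less_power2)
  qed
  have inner: "-1 \<le> C2*(u-R)/(R * sqrt (C2\<^sup>2 + R\<^sup>2 - (u-R)\<^sup>2)) \<and> C2*(u-R)/(R * sqrt (C2\<^sup>2 + R\<^sup>2 - (u-R)\<^sup>2)) \<le> 1"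
    if "u \<in> {0..2*R}" for u
  proof -
    define x where "x = u - R"
    define p where "p = sqrt (C2\<^sup>2 + R\<^sup>2 - x\<^sup>2)"
    have pp: "p\<^sup>2 = C2\<^sup>2 + R\<^sup>2 - x\<^sup>2" using ppos[OF that] by (simp add: p_def x_def)
    have p0: "p > 0" using ppos[OF that] by (simp add: p_def x_def)
    have xR: "x\<^sup>2 \<le> R\<^sup>2" using that R abs_le_square_iff[of x R] by (auto simp: x_def)
    have e: "R\<^sup>2*p\<^sup>2 - C2\<^sup>2*x\<^sup>2 = (C2\<^sup>2+R\<^sup>2)*(R\<^sup>2-x\<^sup>2)" unfolding pp by (simp add: algebra_simps power2_eq_square)
    have "0 \<le> (C2\<^sup>2+R\<^sup>2)*(R\<^sup>2-x\<^sup>2)" using xR by simp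
    hence "(C2*x)\<^sup>2 \<le> (R*p)\<^sup>2" using e by (simp add: power_mult_distrib)
    hence "\<bar>C2*x\<bar> \<le> \<bar>R*p\<bar>" by (simp add: abs_le_square_iff)
    hence "\<bar>C2*x/(R*p)\<bar> \<le> 1" using R p0 by (simp add: abs_divide divide_le_eq del: abs_mult)
    moreover have "\<And>t::real. \<bar>t\<bar> \<le> 1 \<Longrightarrow> -1 \<le> t \<and> t \<le> 1" by auto
    ultimately have "-1 \<le> C2*x/(R*p) \<and> C2*x/(R*p) \<le> 1" by blast
    thus ?thesis unfolding x_def[symmetric] p_def[symmetric] .
  qed
  have cH0: "continuous_on {0..C1} H0"
    unfolding H0_def C1R
  proof (intro continuous_intros ballI conjI)
    fix u assume u: "u \<in> {0..2*R}"
    show "-1 \<le> (u - R)/R" "(u - R)/R \<le> 1" using u R by (auto simp: field_simps)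
    show "-1 \<le> C2*(u-R)/(R * sqrt (C2\<^sup>2 + R\<^sup>2 - (u-R)\<^sup>2))" "C2*(u-R)/(R * sqrt (C2\<^sup>2 + R\<^sup>2 - (u-R)\<^sup>2)) \<le> 1"
      using inner[OF u] by auto
    show "R * sqrt (C2\<^sup>2 + R\<^sup>2 - (u-R)\<^sup>2) \<noteq> 0" using ppos[OF u] R by simp
  qed (use R in auto)
  have cE: "continuous_on {0..C1} E"
    unfolding E_def by (intro continuous_intros) (use C2 in auto)
  have H0C1: "H0 C1 = pi/2 - (C2/S)*(pi/2)"
  proof -
    have "sqrt (C2\<^sup>2 + R\<^sup>2 - R\<^sup>2) = C2" using C2 by simp
    thus ?thesis unfolding H0_def C1R using R C2 by simp
  qed
  have H00: "H0 0 = -(pi/2) + (C2/S)*(pi/2)"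
  proof -
    have "sqrt (C2\<^sup>2 + R\<^sup>2 - (-R)\<^sup>2) = C2" using C2 by simp
    moreover have "C2 * (0 - R) / (R * C2) = -1" using C2 R by simp
    ultimately show ?thesis unfolding H0_def using R C2 by simp
  qed
  have EC1: "E C1 = 0" and E0: "E 0 = 0" unfolding E_def C1R by simp_all
  have SR: "S = sqrt (C2\<^sup>2 + R\<^sup>2)" by (simp add: S_def R_def)
  have dH0: "(H0 has_real_derivative sqrt (u*(2*R-u)) / (C2\<^sup>2 + u*(2*R-u))) (at u)" if "u \<in> {0<..<C1}" for u
    unfolding H0_def SR using deriv_H0[OF R C2, of u] that C1R by auto
  have dE: "(E has_real_derivative (u - R) * sqrt (u*(2*R-u)) / (C2\<^sup>2 + u*(2*R-u))) (at u)" if "u \<in> {0<..<C1}" for u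
    unfolding E_def using deriv_E[OF R C2, of u] that C1R by auto
  show "(LINT u:{0..C1}|lborel. psiJKD C1 C2 u) = C2 - C2\<^sup>2/S"
  proof -
    have "(LINT u:{0..C1}|lborel. psiJKD C1 C2 u) = C2/pi * H0 C1 - C2/pi * H0 0"
    proof (rule lint_ftc)
      show "continuous_on {0..C1} (\<lambda>u. C2/pi * H0 u)" by (intro continuous_intros cH0)
      fix u assume u: "u \<in> {0<..<C1}"
      show "((\<lambda>u. C2/pi * H0 u) has_real_derivative psiJKD C1 C2 u) (at u)"
        unfolding psi using dH0[OF u] by (rule DERIV_cmult)
    qed (use C1 cpsi in \<open>auto simp: psi\<close>)
    also have "\<dots> = C2 - C2\<^sup>2/S" unfolding H0C1 H00 using S0 by (simp add: field_simps power2_eq_square)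
    finally show ?thesis .
  qed
  show "(LINT u:{0..C1}|lborel. u * psiJKD C1 C2 u) = C1/2 * (C2 - C2\<^sup>2/S)"
  proof -
    have "(LINT u:{0..C1}|lborel. u * psiJKD C1 C2 u) = (R * (C2/pi * H0 C1) + C2/pi * E C1) - (R * (C2/pi * H0 0) + C2/pi * E 0)"
    proof (rule lint_ftc)
      show "continuous_on {0..C1} (\<lambda>u. R * (C2/pi * H0 u) + C2/pi * E u)" by (intro continuous_intros cH0 cE)
      show "continuous_on {0..C1} (\<lambda>u. u * psiJKD C1 C2 u)" by (intro continuous_intros cpsi)
      fix u assume u: "u \<in> {0<..<C1}"
      have d1: "((\<lambda>u. R * (C2/pi * H0 u)) has_real_derivative R * (C2/pi * (sqrt (u*(2*R-u)) / (C2\<^sup>2 + u*(2*R-u))))) (at u)"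
        using dH0[OF u] by (intro DERIV_cmult)
      have d2: "((\<lambda>u. C2/pi * E u) has_real_derivative C2/pi * ((u - R) * sqrt (u*(2*R-u)) / (C2\<^sup>2 + u*(2*R-u)))) (at u)"
        using dE[OF u] by (rule DERIV_cmult)
      have "R * (C2/pi * (sqrt (u*(2*R-u)) / (C2\<^sup>2 + u*(2*R-u)))) + C2/pi * ((u - R) * sqrt (u*(2*R-u)) / (C2\<^sup>2 + u*(2*R-u)))
          = u * psiJKD C1 C2 u"
      proof -
        have "0 < C2\<^sup>2 + u*(2*R-u)" using dpos[of u] u C1R by auto
        thus ?thesis unfolding psi by (simp add: divide_inverse algebra_simps)
      qed
      with DERIV_add[OF d1 d2] show "((\<lambda>u. R * (C2/pi * H0 u) + C2/pi * E u) has_real_derivative u * psiJKD C1 C2 u) (at u)"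
        by simp
    qed (use C1 in auto)
    also have "\<dots> = C1/2 * (C2 - C2\<^sup>2/S)" unfolding H0C1 H00 EC1 E0 R_def using S0 by (simp add: field_simps power2_eq_square)
    finally show ?thesis .
  qed
qed



theorem mainTheorem5:
  fixes \<phi> \<alpha> K0 \<eta> \<rho> \<Lambda> :: real and \<sigma> :: "real measure"
  defines "\<nu> \<equiv> \<eta> / \<rho>"
    and "F \<equiv> \<alpha> / \<phi>"
  defines "C2 \<equiv> F * K0 / \<nu>"
  defines "C1 \<equiv> 4 * C2 * F * K0 / \<Lambda>\<^sup>2"
  defines "\<xi>p \<equiv> (C1 + sqrt (C1\<^sup>2 + 4 * C2\<^sup>2)) / 2"
    and "a \<equiv> \<eta> * \<phi> / (\<rho> * K0)"
  defines "r \<equiv> 2 * C2 * sqrt (\<xi>p * (\<xi>p - C1)) / (2 * \<xi>p - C1)"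
    and "T \<equiv> (\<lambda>\<omega>::real. \<i> * complex_of_real (\<eta> * \<phi> / (\<omega> * \<rho>)) * inverse (KD K0 C1 C2 \<omega>))"
  assumes "0 < \<phi>" and "\<phi> < 1" and "0 < \<alpha>" and "0 < K0" and "0 < \<eta>" and "0 < \<rho>" and "0 < \<Lambda>"
    and "sets \<sigma> = sets borel" and "finite_measure \<sigma>"
    and "emeasure \<sigma> (- {0..\<xi>p}) = 0"
    and "\<forall>\<omega>::real. \<omega> \<noteq> 0 \<longrightarrow>
           T \<omega> = \<i> * complex_of_real (a / \<omega>)
                 + (\<integral>t. 1 / (1 - \<i> * complex_of_real (\<omega> * t)) \<partial>\<sigma>)"
  shows "(\<forall>\<omega>::real. \<omega> \<noteq> 0 \<longrightarrow>
            (let s = - \<i> * complex_of_real \<omega> in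
               T \<omega> - \<i> * complex_of_real (a / \<omega>)
                 = complex_of_real \<alpha> + complex_of_real \<alpha> * (csqrt (1 + complex_of_real C1 * s) - 1)
                                          / (complex_of_real C2 * s)
             \<and> T \<omega> - \<i> * complex_of_real (a / \<omega>)
                 = (\<integral>t. 1 / (1 + s * complex_of_real t) \<partial>\<sigma>)))
       \<and> (\<integral>t. t ^ 0 \<partial>\<sigma>) = \<alpha> + 2 * K0 * \<alpha>\<^sup>2 / (\<phi> * \<Lambda>\<^sup>2)
       \<and> (\<forall>k::nat. k \<ge> 1 \<longrightarrow>
            (\<integral>t. t ^ k \<partial>\<sigma>) = C1 ^ (k + 1) * \<alpha> / (fact (k + 1) * 2 ^ (k + 1) * C2)
                                 * (\<Prod>j=1..k. 2 * real j - 1))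
       \<and> \<Lambda> = sqrt (2 * K0 * \<alpha>\<^sup>2 / (\<phi> * ((\<integral>t. t ^ 0 \<partial>\<sigma>) - \<alpha>)))
       \<and> \<Lambda> = sqrt (2 * K0 * \<alpha> / (\<phi> * (mu_lambdaD C1 C2 r \<xi>p 1 / (mu_lambdaD C1 C2 r \<xi>p 0)\<^sup>2 - 1)))"
proof -
  have phi: "0 < \<phi>" and al: "0 < \<alpha>" and K0: "0 < K0" and eta: "0 < \<eta>" and rho: "0 < \<rho>" and La: "0 < \<Lambda>"
    using assms(9,11-15) by auto
  have C2p: "0 < C2" unfolding C2_def F_def \<nu>_def using phi al K0 eta rho by simp
  have C1p: "0 < C1" unfolding C1_def F_def using C2p phi al K0 La by simp
  have ap: "0 < a" unfolding a_def using phi eta rho K0 by simp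
  have aC2: "a * C2 = \<alpha>" unfolding a_def C2_def F_def \<nu>_def using phi eta rho K0 by (simp add: field_simps)
  have aK: "\<eta> * \<phi> / (\<omega> * \<rho>) = a * K0 / \<omega>" for \<omega> unfolding a_def using K0 rho by (simp add: field_simps)
  define S where "S = sqrt (C2\<^sup>2 + (C1/2)\<^sup>2)"
  have S0: "0 < S" unfolding S_def using C2p by (simp add: add_pos_nonneg)
  have D2S: "sqrt (C1\<^sup>2 + 4 * C2\<^sup>2) = 2 * S"
  proof -
    have "C1\<^sup>2 + 4 * C2\<^sup>2 = 2\<^sup>2 * (C2\<^sup>2 + (C1/2)\<^sup>2)" by (simp add: power2_eq_square field_simps)
    hence "sqrt (C1\<^sup>2 + 4 * C2\<^sup>2) = sqrt (2\<^sup>2) * S" unfolding S_def by (simp only: real_sqrt_mult)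
    thus ?thesis by simp
  qed
  have xiS: "\<xi>p = C1/2 + S" unfolding \<xi>p_def D2S by simp
  have SS: "S\<^sup>2 = C2\<^sup>2 + (C1/2)\<^sup>2" unfolding S_def by (simp add: add_nonneg_nonneg)
  have SC1: "C1/2 < S"
  proof -
    have "(C1/2)\<^sup>2 < S\<^sup>2" unfolding SS using C2p by simp
    from power2_less_imp_less[OF this] show ?thesis using S0 by simp
  qed
  have xip: "0 < \<xi>p" and C1xi: "C1 \<le> \<xi>p" using xiS S0 SC1 C1p by auto
  have rr: "r = C2\<^sup>2 / S"
  proof -
    have "\<xi>p * (\<xi>p - C1) = S\<^sup>2 - (C1/2)\<^sup>2" unfolding xiS by (simp add: algebra_simps power2_eq_square)
    hence "\<xi>p * (\<xi>p - C1) = C2\<^sup>2" unfolding SS by simp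
    hence "sqrt (\<xi>p * (\<xi>p - C1)) = C2" using C2p by simp
    moreover have "2 * \<xi>p - C1 = 2 * S" unfolding xiS by simp
    ultimately show ?thesis unfolding r_def using S0 by (simp add: power2_eq_square)
  qed
  have CF: "T \<omega> - \<i> * complex_of_real (a / \<omega>) = complex_of_real \<alpha> + complex_of_real \<alpha> * (csqrt (1 + complex_of_real C1 * (- \<i> * complex_of_real \<omega>)) - 1)
                                          / (complex_of_real C2 * (- \<i> * complex_of_real \<omega>))"
    if w: "\<omega> \<noteq> 0" for \<omega>
  proof -
    define Q where "Q = csqrt (1 + complex_of_real C1 * (- \<i> * complex_of_real \<omega>))"
    have Q: "csqrt (1 - \<i> * complex_of_real (C1 * \<omega>)) = Q" unfolding Q_def by (simp add: algebra_simps)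
    have "T \<omega> = \<i> * (of_real a * of_real K0 / of_real \<omega>) * ((Q - \<i> * of_real (C2 * \<omega>)) / of_real K0)"
      unfolding T_def KD_def aK Q by (simp add: inverse_divide)
    also have "\<dots> = \<i> * of_real a / of_real \<omega> * Q + of_real (a * C2)"
      using K0 w by (simp add: field_simps)
    finally have "T \<omega> = \<i> * of_real a / of_real \<omega> * Q + of_real \<alpha>" unfolding aC2 .
    moreover have "complex_of_real \<alpha> * (Q - 1) / (complex_of_real C2 * (- \<i> * complex_of_real \<omega>)) = \<i> * of_real a / of_real \<omega> * (Q - 1)"
      using C2p w unfolding aC2[symmetric] by (simp add: field_simps)
    ultimately show ?thesis unfolding Q_def[symmetric] using w by (simp add: field_simps)
  qed
  have HYP: "T \<omega> - \<i> * complex_of_real (a / \<omega>) = (\<integral>t. 1 / (1 - \<i> * complex_of_real (\<omega> * t)) \<partial>\<sigma>)" if "\<omega> \<noteq> 0" for \<omega>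
    using assms(19) that by simp
  have part1: "\<forall>\<omega>::real. \<omega> \<noteq> 0 \<longrightarrow>
            (let s = - \<i> * complex_of_real \<omega> in
               T \<omega> - \<i> * complex_of_real (a / \<omega>)
                 = complex_of_real \<alpha> + complex_of_real \<alpha> * (csqrt (1 + complex_of_real C1 * s) - 1)
                                          / (complex_of_real C2 * s)
             \<and> T \<omega> - \<i> * complex_of_real (a / \<omega>)
                 = (\<integral>t. 1 / (1 + s * complex_of_real t) \<partial>\<sigma>))"
  proof (intro allI impI)
    fix \<omega> :: real assume w: "\<omega> \<noteq> 0"
    have "(\<lambda>t. 1 / (1 - \<i> * complex_of_real (\<omega> * t))) = (\<lambda>t. 1 / (1 + (- \<i> * complex_of_real \<omega>) * complex_of_real t))"
      by (rule ext) (simp add: algebra_simps)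
    thus "let s = - \<i> * complex_of_real \<omega> in
               T \<omega> - \<i> * complex_of_real (a / \<omega>)
                 = complex_of_real \<alpha> + complex_of_real \<alpha> * (csqrt (1 + complex_of_real C1 * s) - 1)
                                          / (complex_of_real C2 * s)
             \<and> T \<omega> - \<i> * complex_of_real (a / \<omega>)
                 = (\<integral>t. 1 / (1 + s * complex_of_real t) \<partial>\<sigma>)"
      using CF[OF w] HYP[OF w] by (simp add: Let_def)
  qed
  define d where "d n = (if n = 0 then complex_of_real \<alpha> else 0) + complex_of_real (a*C1) * ((1/2) gchoose Suc n) * (-\<i> * of_real C1)^n" for n
  define c where "c n = complex_of_real (\<integral>t. t^n \<partial>\<sigma>) * \<i>^n - d n" for n
  have c0: "c n = 0" for n
  proof (rule powser_zero_unique[of "1/\<xi>p"])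
    show "0 < 1/\<xi>p" using xip by simp
    fix x :: real assume x: "0 < x" "x < 1/\<xi>p"
    have xx: "\<bar>x\<bar> * \<xi>p < 1" using x xip by (simp add: field_simps)
    have xc: "\<bar>C1 * x\<bar> < 1"
    proof -
      have "\<bar>C1 * x\<bar> = x * C1" using x C1p by simp
      also have "\<dots> \<le> x * \<xi>p" using C1xi x by simp
      finally show ?thesis using xx x by simp
    qed
    have m: "(\<lambda>k. complex_of_real (\<integral>t. t^k \<partial>\<sigma>) * (\<i> * of_real x)^k) sums
           (\<integral>t. 1 / (1 - \<i> * complex_of_real (x * t)) \<partial>\<sigma>)"
      by (rule moment_series[OF assms(16,17,18) xip xx])
    have b: "(\<lambda>n. d n * of_real x ^ n) sums (of_real \<alpha> + of_real a * (csqrt (1 + of_real C1 * (-\<i> * of_real x)) - 1) / (-\<i> * of_real x))"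
      unfolding d_def by (rule sqrt_series) (use x xc in auto)
    have eq: "(\<integral>t. 1 / (1 - \<i> * complex_of_real (x * t)) \<partial>\<sigma>) = of_real \<alpha> + of_real a * (csqrt (1 + of_real C1 * (-\<i> * of_real x)) - 1) / (-\<i> * of_real x)"
    proof -
      have "complex_of_real \<alpha> * (csqrt (1 + complex_of_real C1 * (- \<i> * complex_of_real x)) - 1) / (complex_of_real C2 * (- \<i> * complex_of_real x))
          = of_real a * (csqrt (1 + of_real C1 * (-\<i> * of_real x)) - 1) / (-\<i> * of_real x)"
        using C2p x unfolding aC2[symmetric] by (simp add: field_simps)
      thus ?thesis using CF[of x] HYP[of x] x by simp
    qed
    from sums_diff[OF m[unfolded eq] b] show "(\<lambda>n. c n * complex_of_real x ^ n) sums 0"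
      unfolding c_def by (simp add: power_mult_distrib algebra_simps)
  qed
  have mom: "(\<integral>t. t^k \<partial>\<sigma>) = (if k = 0 then \<alpha> else 0) + a * C1^(k+1) * (\<Prod>j=1..k. 2 * real j - 1) / (fact (Suc k) * 2^(Suc k))" for k
  proof -
    have e1: "complex_of_real (\<integral>t. t^k \<partial>\<sigma>) * \<i>^k = d k" using c0[of k] unfolding c_def by simp
    have ii: "\<i>^k * (-\<i>)^k = (1::complex)" by (simp flip: power_mult_distrib)
    have "complex_of_real (\<integral>t. t^k \<partial>\<sigma>) = d k * (-\<i>)^k"
      using arg_cong[OF e1, of "\<lambda>z. z * (-\<i>)^k"] ii by (simp add: mult.assoc)
    also have "\<dots> = (if k = 0 then complex_of_real \<alpha> else 0) + complex_of_real (a*C1) * of_real C1 ^ k * (((1/2) gchoose Suc k) * (-1)^k)"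
    proof -
      have h1: "(-\<i> * complex_of_real C1)^k * (-\<i>)^k = ((-\<i> * complex_of_real C1) * (-\<i>))^k"
        by (simp only: power_mult_distrib)
      have h2: "(-\<i> * complex_of_real C1) * (-\<i>) = - complex_of_real C1"
      proof -
        have "(-\<i> * complex_of_real C1) * (-\<i>) = complex_of_real C1 * (\<i> * \<i>)" by (simp only: mult_ac mult_minus_left mult_minus_right minus_minus)
        thus ?thesis by simp
      qed
      have h: "(-\<i> * complex_of_real C1)^k * (-\<i>)^k = of_real C1 ^ k * (-1)^k"
        unfolding h1 h2 using power_minus[of "complex_of_real C1" k] by (simp only: mult.commute)
      have "d k * (-\<i>)^k = (if k = 0 then complex_of_real \<alpha> else 0) * (-\<i>)^k + complex_of_real (a*C1) * ((1/2) gchoose Suc k) * ((-\<i> * of_real C1)^k * (-\<i>)^k)"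
        unfolding d_def by (simp add: distrib_right mult.assoc)
      also have "\<dots> = (if k = 0 then complex_of_real \<alpha> else 0) + complex_of_real (a*C1) * of_real C1 ^ k * (((1/2) gchoose Suc k) * (-1)^k)"
        unfolding h by simp
      finally show ?thesis .
    qed
    also have "\<dots> = complex_of_real ((if k = 0 then \<alpha> else 0) + a * C1^(k+1) * (\<Prod>j=1..k. 2 * real j - 1) / (fact (Suc k) * 2^(Suc k)))"
      unfolding half_gchoose by simp
    finally show ?thesis by (simp only: of_real_eq_iff)
  qed
  have mu0: "(\<integral>t. t ^ 0 \<partial>\<sigma>) = \<alpha> + 2 * K0 * \<alpha>\<^sup>2 / (\<phi> * \<Lambda>\<^sup>2)"
  proof -
    have "(\<integral>t. t ^ 0 \<partial>\<sigma>) = \<alpha> + a * C1 / 2" using mom[of 0] by simp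
    also have "a * C1 / 2 = 2 * K0 * \<alpha>\<^sup>2 / (\<phi> * \<Lambda>\<^sup>2)"
      unfolding C1_def aC2[symmetric] F_def using phi La C2p by (simp add: field_simps power2_eq_square)
    finally show ?thesis .
  qed
  have muk: "\<forall>k::nat. k \<ge> 1 \<longrightarrow>
            (\<integral>t. t ^ k \<partial>\<sigma>) = C1 ^ (k + 1) * \<alpha> / (fact (k + 1) * 2 ^ (k + 1) * C2)
                                 * (\<Prod>j=1..k. 2 * real j - 1)"
  proof (intro allI impI)
    fix k :: nat assume k: "k \<ge> 1"
    define D :: real where "D = fact (Suc k) * 2 ^ (Suc k)"
    define X where "X = C1 ^ (k + 1)"
    define P where "P = (\<Prod>j=1..k. 2 * real j - 1)"
    have m: "(\<integral>t. t ^ k \<partial>\<sigma>) = a * X * P / D" using k unfolding mom X_def P_def D_def by simp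
    have q: "X * (a * C2) / (D * C2) = X * a / D" using C2p by simp
    have "a * X * P / D = X * (a * C2) / (D * C2) * P" unfolding q by (simp add: divide_inverse algebra_simps)
    thus "(\<integral>t. t ^ k \<partial>\<sigma>) = C1 ^ (k + 1) * \<alpha> / (fact (k + 1) * 2 ^ (k + 1) * C2) * (\<Prod>j=1..k. 2 * real j - 1)"
      unfolding m aC2 by (simp add: X_def P_def D_def)
  qed
  have L1: "\<Lambda> = sqrt (2 * K0 * \<alpha>\<^sup>2 / (\<phi> * ((\<integral>t. t ^ 0 \<partial>\<sigma>) - \<alpha>)))"
  proof -
    have "2 * K0 * \<alpha>\<^sup>2 / (\<phi> * ((\<integral>t. t ^ 0 \<partial>\<sigma>) - \<alpha>)) = \<Lambda>\<^sup>2"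
      unfolding mu0 using phi K0 al La by (simp add: field_simps power2_eq_square)
    thus ?thesis using La by simp
  qed
  have L2: "\<Lambda> = sqrt (2 * K0 * \<alpha> / (\<phi> * (mu_lambdaD C1 C2 r \<xi>p 1 / (mu_lambdaD C1 C2 r \<xi>p 0)\<^sup>2 - 1)))"
  proof -
    have m0: "mu_lambdaD C1 C2 r \<xi>p 0 = C2"
      unfolding mu_lambdaD_def using psi_integrals(1)[OF C1p C2p] unfolding S_def[symmetric] rr by simp
    have m1: "mu_lambdaD C1 C2 r \<xi>p 1 = C1 * C2 / 2 + C2\<^sup>2"
      unfolding mu_lambdaD_def using psi_integrals(2)[OF C1p C2p] unfolding S_def[symmetric] rr xiS
      using S0 by (simp add: field_simps)
    have "mu_lambdaD C1 C2 r \<xi>p 1 / (mu_lambdaD C1 C2 r \<xi>p 0)\<^sup>2 - 1 = C1 / (2 * C2)"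
      unfolding m0 m1 using C2p by (simp add: field_simps power2_eq_square)
    moreover have "2 * K0 * \<alpha> / (\<phi> * (C1 / (2 * C2))) = \<Lambda>\<^sup>2"
      unfolding C1_def F_def using phi K0 al La C2p by (simp add: field_simps power2_eq_square)
    ultimately show ?thesis using La by simp
  qed
  show ?thesis using part1 mu0 muk L1 L2 by blast
qed

end
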